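(* Let $G$ be a compact matrix Lie group of $n\times n$ unitary matrices with normalized Haar measure $\eta$, let $\epsilon>0$, and let $X=\{x_1,\dots,x_N\}\subset\mathbb{C}^n$ satisfy $x_i\neq x_j$ for $i\neq j$ and $Ax_i\neq x_i$ for all $i$ and all $A\in G$ with $A\neq I$. Let $t$ be a positive integer and let $S^t_{ij}$ be as in the context. Suppose $x_j=Q\cdot x_i$ for some $Q\in G$. Then for all $k,r\in[N]$ and $R\in G$, $$\int_G S^t_{ik}(I,C)\,S^t_{ir}(I,CR)\,d\eta(C)=\int_G S^t_{jk}(I,C)\,S^t_{jr}(I,CR)\,d\eta(C),$$ i.e. $S^t_{i,\cdot}(I,\cdot)\circledast S^t_{i,\cdot}(I,\cdot)=S^t_{j,\cdot}(I,\cdot)\circledast S^t_{j,\cdot}(I,\cdot)$ as functions on $[N]^2\times G$.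
   Context: $[N]=\{1,\dots,N\}$. $W_{ij}(A,B)=e^{-\|Ax_i-Bx_j\|^2/\epsilon}$; $D_{ii}=\sum_{j=1}^N\int_G W_{ij}(I,C)\,d\eta(C)$; $S_{ij}(A,B)=W_{ij}(A,B)/\sqrt{D_{ii}D_{jj}}$. $S^1_{ij}=S_{ij}$ and $S^t_{ij}(A,B)=\sum_{k=1}^N\int_G S^{t-1}_{ik}(A,C)S_{kj}(C,B)\,d\eta(C)$ for $t\ge2$ (the kernel of the $t$-th power of the integral operator $S\{f\}(i,A)=\sum_j\int_G S_{ij}(A,B)f_j(B)\,d\eta(B)$ on $L^2([N]\times G)$). For functions $f,g$ on $[N]\times G$ (written $f(k,C)=f_k(C)$), $(f\circledast g)(k,r,R)=\int_G f_k(C)\,g_r(CR)\,d\eta(C)$; $S^t_{i,\cdot}(I,\cdot)$ denotes $(k,C)\mapsto S^t_{ik}(I,C)$. *)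

theory Defs
  imports "HOL-Analysis.Analysis" "HOL-Probability.Probability"
begin

type_synonym 'n cmat = "complex^'n^'n"

definition conj_transpose :: "'n cmat \<Rightarrow> 'n::finite cmat" where
  "conj_transpose A = (\<chi> i j. cnj (A $ j $ i))"

definition unitary_mat :: "'n::finite cmat \<Rightarrow> bool" where
  "unitary_mat A \<longleftrightarrow> A ** conj_transpose A = mat 1"

text \<open>Compact matrix Lie group of unitary matrices: a compact (hence closed) subgroup of U(n).
  Closed subgroups of U(n) are Lie groups (Cartan).\<close>
definition compact_unitary_group :: "'n::finite cmat set \<Rightarrow> bool" where
  "compact_unitary_group G \<longleftrightarrow> compact G \<and> mat 1 \<in> G \<and> (\<forall>A\<in>G. unitary_mat A)
     \<and> (\<forall>A\<in>G. \<forall>B\<in>G. A ** B \<in> G) \<and> (\<forall>A\<in>G. \<exists>B\<in>G. A ** B = mat 1)"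

definition normalized_haar :: "'n::finite cmat set \<Rightarrow> 'n cmat measure \<Rightarrow> bool" where
  "normalized_haar G \<eta> \<longleftrightarrow> prob_space \<eta> \<and>
     sets \<eta> = sets (restrict_space borel G) \<and> space \<eta> = G \<and>
     (\<forall>g\<in>G. distr \<eta> \<eta> (\<lambda>C. g ** C) = \<eta> \<and> distr \<eta> \<eta> (\<lambda>C. C ** g) = \<eta>)"

definition W :: "(nat \<Rightarrow> complex^'n) \<Rightarrow> real \<Rightarrow> nat \<Rightarrow> nat \<Rightarrow> 'n::finite cmat \<Rightarrow> 'n cmat \<Rightarrow> real" where
  "W x \<epsilon> i j A B = exp (- (norm (A *v x i - B *v x j))\<^sup>2 / \<epsilon>)"

definition Dg :: "'n::finite cmat measure \<Rightarrow> nat \<Rightarrow> (nat \<Rightarrow> complex^'n) \<Rightarrow> real \<Rightarrow> nat \<Rightarrow> real" where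
  "Dg \<eta> N x \<epsilon> i = (\<Sum>j\<in>{1..N}. \<integral>C. W x \<epsilon> i j (mat 1) C \<partial>\<eta>)"

definition Sk :: "'n::finite cmat measure \<Rightarrow> nat \<Rightarrow> (nat \<Rightarrow> complex^'n) \<Rightarrow> real \<Rightarrow> nat \<Rightarrow> nat \<Rightarrow> 'n cmat \<Rightarrow> 'n cmat \<Rightarrow> real" where
  "Sk \<eta> N x \<epsilon> i j A B = W x \<epsilon> i j A B / sqrt (Dg \<eta> N x \<epsilon> i * Dg \<eta> N x \<epsilon> j)"

text \<open>S^t for t \<ge> 1 (index t = 0 is set equal to S and never used).\<close>
fun Spow :: "'n::finite cmat measure \<Rightarrow> nat \<Rightarrow> (nat \<Rightarrow> complex^'n) \<Rightarrow> real \<Rightarrow> nat \<Rightarrow> nat \<Rightarrow> nat \<Rightarrow> 'n cmat \<Rightarrow> 'n cmat \<Rightarrow> real" where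
  "Spow \<eta> N x \<epsilon> 0 i j A B = Sk \<eta> N x \<epsilon> i j A B"
| "Spow \<eta> N x \<epsilon> (Suc 0) i j A B = Sk \<eta> N x \<epsilon> i j A B"
| "Spow \<eta> N x \<epsilon> (Suc (Suc t)) i j A B =
     (\<Sum>k\<in>{1..N}. \<integral>C. Spow \<eta> N x \<epsilon> (Suc t) i k A C * Sk \<eta> N x \<epsilon> k j C B \<partial>\<eta>)"

definition gconv :: "'n::finite cmat measure \<Rightarrow> (nat \<Rightarrow> 'n cmat \<Rightarrow> real) \<Rightarrow> (nat \<Rightarrow> 'n cmat \<Rightarrow> real)
    \<Rightarrow> nat \<Rightarrow> nat \<Rightarrow> 'n cmat \<Rightarrow> real" where
  "gconv \<eta> f g k r R = (\<integral>C. f k C * g r (C ** R) \<partial>\<eta>)"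

end

theory Submission
  imports Defs
begin
lemma normsq_vec: "complex_of_real ((norm (v::complex^'n::finite))^2) = (\<Sum>i\<in>UNIV. v$i * cnj (v$i))"
proof -
  have "(norm v)^2 = (\<Sum>i\<in>UNIV. (cmod (v$i))^2)"
    unfolding norm_vec_def L2_set_def by (simp add: sum_nonneg)
  then show ?thesis by (simp only: of_real_sum complex_norm_square)
qed

lemma iso:
  fixes U :: "'n::finite cmat"
  assumes "conj_transpose U ** U = mat 1"
  shows "norm (U *v y) = norm y"
proof -
  have d: "(\<Sum>i\<in>UNIV. cnj (U$i$l) * U$i$j) = (if l = j then 1 else 0)" for l j
  proof -
    have "(conj_transpose U ** U) $ l $ j = (if l = j then 1 else 0)" using assms by (simp add: mat_def)
    then show ?thesis by (simp add: matrix_matrix_mult_def conj_transpose_def)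
  qed
  have "(\<Sum>i\<in>UNIV. (U *v y)$i * cnj ((U *v y)$i))
     = (\<Sum>i\<in>UNIV. \<Sum>j\<in>UNIV. \<Sum>l\<in>UNIV. (y$j * cnj (y$l)) * (cnj (U$i$l) * U$i$j))"
    apply (simp add: matrix_vector_mult_def sum_distrib_left sum_distrib_right)
    apply (rule sum.cong[OF refl], subst sum.swap, simp add: algebra_simps)
    done
  also have "\<dots> = (\<Sum>j\<in>UNIV. \<Sum>l\<in>UNIV. (y$j * cnj (y$l)) * (\<Sum>i\<in>UNIV. cnj (U$i$l) * U$i$j))"
    by (simp add: sum_distrib_left, subst sum.swap, rule sum.cong, simp, subst sum.swap, simp)
  also have "\<dots> = (\<Sum>j\<in>UNIV. y$j * cnj (y$j))"
    by (simp add: d if_distrib cong: if_cong)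
  finally have "complex_of_real ((norm (U *v y))^2) = complex_of_real ((norm y)^2)"
    by (simp only: normsq_vec)
  then have "(norm (U *v y))^2 = (norm y)^2" using of_real_eq_iff by blast
  then show ?thesis by (simp add: power2_eq_iff_nonneg)
qed

lemma unitary_left:
  assumes "compact_unitary_group G" "U \<in> G"
  shows "conj_transpose U ** U = mat 1"
  using assms matrix_left_right_inverse unfolding compact_unitary_group_def unitary_mat_def by blast

lemma mult_meas:
  assumes "compact_unitary_group G" "normalized_haar G \<eta>" "U \<in> G"
  shows "(\<lambda>C. U ** C) \<in> measurable \<eta> \<eta>"
proof -
  have s: "sets \<eta> = sets (restrict_space borel G)" using assms(2) unfolding normalized_haar_def by blast
  have c: "continuous_on UNIV (\<lambda>C::'a cmat. U ** C)"
    unfolding matrix_matrix_mult_def by (intro continuous_intros)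
  have "(\<lambda>C. U ** C) \<in> measurable (restrict_space borel G) (restrict_space borel G)"
    apply (rule measurable_restrict_space3)
    using borel_measurable_continuous_onI[OF c] assms(1,3) unfolding compact_unitary_group_def by auto
  then show ?thesis using measurable_cong_sets[OF s s] by blast
qed

lemma haar_left:
  fixes f :: "'a::finite cmat \<Rightarrow> real"
  assumes cug: "compact_unitary_group G" and nh: "normalized_haar G \<eta>" and U: "U \<in> G"
  shows "(\<integral>C. f (U ** C) \<partial>\<eta>) = (\<integral>C. f C \<partial>\<eta>)"
proof -
  obtain U' where U': "U' \<in> G" "U ** U' = mat 1" using cug U unfolding compact_unitary_group_def by blast
  have T: "(\<lambda>C. U ** C) \<in> measurable \<eta> \<eta>" using mult_meas[OF cug nh U] .
  have T': "(\<lambda>C. U' ** C) \<in> measurable \<eta> \<eta>" using mult_meas[OF cug nh U'(1)] .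
  have d: "distr \<eta> \<eta> (\<lambda>C. U ** C) = \<eta>" using nh U unfolding normalized_haar_def by blast
  show ?thesis
  proof (cases "f \<in> borel_measurable \<eta>")
    case True
    have "(\<integral>C. f C \<partial>\<eta>) = (\<integral>C. f C \<partial>(distr \<eta> \<eta> (\<lambda>C. U ** C)))" using d by simp
    also have "\<dots> = (\<integral>C. f (U ** C) \<partial>\<eta>)" by (rule integral_distr[OF T True])
    finally show ?thesis by simp
  next
    case False
    have nm: "(\<lambda>C. f (U ** C)) \<notin> borel_measurable \<eta>"
    proof
      assume "(\<lambda>C. f (U ** C)) \<in> borel_measurable \<eta>"
      then have "(\<lambda>C. f (U ** (U' ** C))) \<in> borel_measurable \<eta>"
        using measurable_compose[OF T'] by blast
      then have "f \<in> borel_measurable \<eta>"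
        by (simp add: matrix_mul_assoc U'(2))
      then show False using False by simp
    qed
    then show ?thesis using False not_integrable_integral_eq borel_measurable_integrable by metis
  qed
qed

context
  fixes G :: "'n::finite cmat set" and \<eta> :: "'n cmat measure" and N :: nat and x :: "nat \<Rightarrow> complex^'n" and \<epsilon> :: real
  assumes cug: "compact_unitary_group G" and nh: "normalized_haar G \<eta>"
begin

lemma W_shift: "x j = Q *v x i \<Longrightarrow> W x \<epsilon> j k A B = W x \<epsilon> i k (A ** Q) B"
  unfolding W_def by (simp add: matrix_vector_mul_assoc[symmetric])

lemma W_inv: assumes "U \<in> G" shows "W x \<epsilon> a b (U ** A) (U ** B) = W x \<epsilon> a b A B"
proof -
  have "(U ** A) *v x a - (U ** B) *v x b = U *v (A *v x a - B *v x b)"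
    by (simp add: matrix_vector_mul_assoc[symmetric] matrix_vector_mult_diff_distrib)
  then show ?thesis unfolding W_def using iso[OF unitary_left[OF cug assms]] by simp
qed

lemma Sk_inv: assumes "U \<in> G" shows "Sk \<eta> N x \<epsilon> a b (U ** A) (U ** B) = Sk \<eta> N x \<epsilon> a b A B"
  unfolding Sk_def using W_inv[OF assms] by simp

lemma Spow_inv: assumes "U \<in> G" shows "Spow \<eta> N x \<epsilon> t a b (U ** A) (U ** B) = Spow \<eta> N x \<epsilon> t a b A B"
proof -
  have "Spow \<eta> N x \<epsilon> (Suc t) a b (U ** A) (U ** B) = Spow \<eta> N x \<epsilon> (Suc t) a b A B" for t
  proof (induction t arbitrary: b A B)
    case 0
    then show ?case using Sk_inv[OF assms] by simp
  next
    case (Suc t)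
    have "(\<integral>C. Spow \<eta> N x \<epsilon> (Suc t) a l (U ** A) C * Sk \<eta> N x \<epsilon> l b C (U ** B) \<partial>\<eta>)
       = (\<integral>C. Spow \<eta> N x \<epsilon> (Suc t) a l A C * Sk \<eta> N x \<epsilon> l b C B \<partial>\<eta>)" for l
    proof -
      have "(\<integral>C. Spow \<eta> N x \<epsilon> (Suc t) a l (U ** A) C * Sk \<eta> N x \<epsilon> l b C (U ** B) \<partial>\<eta>)
         = (\<integral>C. Spow \<eta> N x \<epsilon> (Suc t) a l (U ** A) (U ** C) * Sk \<eta> N x \<epsilon> l b (U ** C) (U ** B) \<partial>\<eta>)"
        using haar_left[OF cug nh assms, of "\<lambda>C. Spow \<eta> N x \<epsilon> (Suc t) a l (U ** A) C * Sk \<eta> N x \<epsilon> l b C (U ** B)"]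
        by simp
      also have "\<dots> = (\<integral>C. Spow \<eta> N x \<epsilon> (Suc t) a l A C * Sk \<eta> N x \<epsilon> l b C B \<partial>\<eta>)"
        using Suc.IH Sk_inv[OF assms] by simp
      finally show ?thesis .
    qed
    then show ?case by simp
  qed
  then show ?thesis using Sk_inv[OF assms] by (cases t) auto
qed

lemma Dg_eq:
  assumes "Q \<in> G" "x j = Q *v x i"
  shows "Dg \<eta> N x \<epsilon> j = Dg \<eta> N x \<epsilon> i"
proof -
  obtain V where V: "V \<in> G" "Q ** V = mat 1" using cug assms(1) unfolding compact_unitary_group_def by blast
  have "(\<integral>C. W x \<epsilon> j k (mat 1) C \<partial>\<eta>) = (\<integral>C. W x \<epsilon> i k (mat 1) C \<partial>\<eta>)" for k
  proof -
    have "W x \<epsilon> j k (mat 1) C = W x \<epsilon> i k (mat 1) (V ** C)" for C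
    proof -
      have "W x \<epsilon> j k (mat 1) C = W x \<epsilon> i k (Q ** mat 1) (Q ** (V ** C))"
        using W_shift[OF assms(2)] by (simp add: matrix_mul_assoc V(2))
      also have "\<dots> = W x \<epsilon> i k (mat 1) (V ** C)" by (rule W_inv[OF assms(1)])
      finally show ?thesis .
    qed
    then show ?thesis using haar_left[OF cug nh V(1), of "\<lambda>C. W x \<epsilon> i k (mat 1) C"] by simp
  qed
  then show ?thesis unfolding Dg_def by simp
qed

lemma Spow_shift:
  assumes "Q \<in> G" "x j = Q *v x i"
  shows "Spow \<eta> N x \<epsilon> t j k A B = Spow \<eta> N x \<epsilon> t i k (A ** Q) B"
proof -
  have sk: "Sk \<eta> N x \<epsilon> j k A B = Sk \<eta> N x \<epsilon> i k (A ** Q) B" for k A B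
    unfolding Sk_def using Dg_eq[OF assms] W_shift[OF assms(2)] by simp
  have "Spow \<eta> N x \<epsilon> (Suc t) j k A B = Spow \<eta> N x \<epsilon> (Suc t) i k (A ** Q) B" for t
    by (induction t arbitrary: k B) (simp_all add: sk)
  then show ?thesis by (cases t) (auto simp: sk)
qed

end

theorem proposition3:
  fixes G :: "(complex^'n::finite^'n) set" and \<eta> :: "(complex^'n^'n) measure"
    and N :: nat and x :: "nat \<Rightarrow> complex^'n" and \<epsilon> :: real and t i j :: nat and Q :: "complex^'n^'n"
  assumes "compact_unitary_group G"
    and "normalized_haar G \<eta>"
    and "\<epsilon> > 0"
    and "\<forall>a\<in>{1..N}. \<forall>b\<in>{1..N}. a \<noteq> b \<longrightarrow> x a \<noteq> x b"
    and "\<forall>a\<in>{1..N}. \<forall>A\<in>G. A \<noteq> mat 1 \<longrightarrow> A *v x a \<noteq> x a"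
    and "t \<ge> 1"
    and "i \<in> {1..N}" and "j \<in> {1..N}"
    and "Q \<in> G" and "x j = Q *v x i"
  shows "\<forall>k\<in>{1..N}. \<forall>r\<in>{1..N}. \<forall>R\<in>G.
     gconv \<eta> (\<lambda>k C. Spow \<eta> N x \<epsilon> t i k (mat 1) C) (\<lambda>r C. Spow \<eta> N x \<epsilon> t i r (mat 1) C) k r R
   = gconv \<eta> (\<lambda>k C. Spow \<eta> N x \<epsilon> t j k (mat 1) C) (\<lambda>r C. Spow \<eta> N x \<epsilon> t j r (mat 1) C) k r R"
proof (intro ballI)
  fix k r R
  note cug = assms(1) and nh = assms(2)
  obtain V where V: "V \<in> G" "Q ** V = mat 1" using cug assms(9) unfolding compact_unitary_group_def by blast
  let ?S = "Spow \<eta> N x \<epsilon> t"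
  have e: "?S j a (mat 1) C = ?S i a (mat 1) (V ** C)" for a C
  proof -
    have "?S j a (mat 1) C = ?S i a (Q ** mat 1) (Q ** (V ** C))"
      using Spow_shift[OF cug nh assms(9,10)] by (simp add: matrix_mul_assoc V(2))
    also have "\<dots> = ?S i a (mat 1) (V ** C)" by (rule Spow_inv[OF cug nh assms(9)])
    finally show ?thesis .
  qed
  have "gconv \<eta> (\<lambda>k C. ?S j k (mat 1) C) (\<lambda>r C. ?S j r (mat 1) C) k r R
     = (\<integral>C. ?S i k (mat 1) (V ** C) * ?S i r (mat 1) ((V ** C) ** R) \<partial>\<eta>)"
    unfolding gconv_def e by (simp add: matrix_mul_assoc)
  also have "\<dots> = (\<integral>C. ?S i k (mat 1) C * ?S i r (mat 1) (C ** R) \<partial>\<eta>)"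
    by (rule haar_left[OF cug nh V(1), of "\<lambda>C. ?S i k (mat 1) C * ?S i r (mat 1) (C ** R)"])
  finally show "gconv \<eta> (\<lambda>k C. ?S i k (mat 1) C) (\<lambda>r C. ?S i r (mat 1) C) k r R
     = gconv \<eta> (\<lambda>k C. ?S j k (mat 1) C) (\<lambda>r C. ?S j r (mat 1) C) k r R"
    unfolding gconv_def by simp
qed

end
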